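(* Let $D$ be an integral domain, $T$ an overring of $D$, $\star$ a semistar operation on $D$ and $\star'$ a semistar operation on $T$. The following are equivalent: (i) $T$ is $(\star,\star')$-linked to $D$; (ii) for every nonzero ideal $I$ of $D$, $I^{\star_f}=D^\star$ implies $(IT)^{\star'_f}=T^{\star'}$; (iii) for every quasi-$\star'_f$-ideal $J$ of $T$ with $J\ne T$, $(J\cap D)^{\star_f}\ne D^\star$; (iv) for every quasi-$\star'_f$-prime ideal $Q$ of $T$, $(Q\cap D)^{\star_f}\ne D^\star$; (v) for every quasi-$\star'_f$-maximal ideal $N$ of $T$, $(N\cap D)^{\star_f}\ne D^\star$.
   Context: Let $D$ be an integral domain with quotient field $K$. $\overline{\mathbf F}(D)$ denotes the set of all nonzero $D$-submodules of $K$ and $\mathbf f(D)$ the set of nonzero finitely generated $D$-submodules of $K$. A semistar operation on $D$ is a map $\star:\overline{\mathbf F}(D)\to\overline{\mathbf F}(D)$, $E\mapsto E^\star$, such that for all $0\ne x\in K$ and $E,F\in\overline{\mathbf F}(D)$: (1) $(xE)^\star=xE^\star$; (2) $E\subseteq F\Rightarrow E^\star\subseteq F^\star$; (3) $E\subseteq E^\star$ and $(E^\star)^\star=E^\star$. $\star_f$ is defined by $E^{\star_f}=\bigcup\{F^\star:F\in\mathbf f(D),F\subseteq E\}$. A nonzero ideal $I$ of $D$ is a quasi-$\star$-ideal if $I^\star\cap D=I$; a quasi-$\star$-prime is a prime quasi-$\star$-ideal; a quasi-$\star$-maximal ideal is a maximal element among proper quasi-$\star$-ideals. An overring of $D$ is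 a ring $T$ with $D\subseteq T\subseteq K$; the same notions are defined on $T$. $T$ is $(\star,\star')$-linked to $D$ if for every nonzero finitely generated ideal $F\subseteq D$ with $F^\star=D^\star$ one has $(FT)^{\star'}=T^{\star'}$. *)

theory Defs
  imports Main
begin

text \<open>The quotient field K is the ambient type 'K (a field); subrings of K are sets.\<close>

definition subring :: "'K::field set \<Rightarrow> bool" where
  "subring R \<longleftrightarrow> 0 \<in> R \<and> 1 \<in> R \<and> (\<forall>x\<in>R. \<forall>y\<in>R. x + y \<in> R \<and> x - y \<in> R \<and> x * y \<in> R)"

definition domain_with_qf :: "'K::field set \<Rightarrow> bool" where
  "domain_with_qf D \<longleftrightarrow> subring D \<and> (\<forall>x::'K. \<exists>a\<in>D. \<exists>b\<in>D. b \<noteq> 0 \<and> x = a / b)"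

definition overring :: "'K::field set \<Rightarrow> 'K set \<Rightarrow> bool" where
  "overring D T \<longleftrightarrow> subring T \<and> D \<subseteq> T"

definition submodule :: "'K::field set \<Rightarrow> 'K set \<Rightarrow> bool" where
  "submodule R E \<longleftrightarrow> 0 \<in> E \<and> (\<forall>x\<in>E. \<forall>y\<in>E. x + y \<in> E) \<and> (\<forall>r\<in>R. \<forall>x\<in>E. r * x \<in> E)"

definition Fbar :: "'K::field set \<Rightarrow> 'K set set" where
  "Fbar R = {E. submodule R E \<and> E \<noteq> {0}}"

definition rspan :: "'K::field set \<Rightarrow> 'K set \<Rightarrow> 'K set" where
  "rspan R S = {(\<Sum>s\<in>S. a s * s) | a. \<forall>s\<in>S. a s \<in> R}"

definition ffg :: "'K::field set \<Rightarrow> 'K set set" where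
  "ffg R = {E. \<exists>S. finite S \<and> E = rspan R S \<and> E \<noteq> {0}}"

definition semistar :: "'K::field set \<Rightarrow> ('K set \<Rightarrow> 'K set) \<Rightarrow> bool" where
  "semistar R st \<longleftrightarrow>
     (\<forall>E\<in>Fbar R. st E \<in> Fbar R) \<and>
     (\<forall>x E. x \<noteq> 0 \<longrightarrow> E \<in> Fbar R \<longrightarrow> st ((\<lambda>e. x * e) ` E) = (\<lambda>e. x * e) ` st E) \<and>
     (\<forall>E\<in>Fbar R. \<forall>F\<in>Fbar R. E \<subseteq> F \<longrightarrow> st E \<subseteq> st F) \<and>
     (\<forall>E\<in>Fbar R. E \<subseteq> st E \<and> st (st E) = st E)"

definition star_f :: "'K::field set \<Rightarrow> ('K set \<Rightarrow> 'K set) \<Rightarrow> 'K set \<Rightarrow> 'K set" where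
  "star_f R st E = \<Union>{st F | F. F \<in> ffg R \<and> F \<subseteq> E}"

definition nz_ideal :: "'K::field set \<Rightarrow> 'K set \<Rightarrow> bool" where
  "nz_ideal R I \<longleftrightarrow> I \<subseteq> R \<and> submodule R I \<and> I \<noteq> {0}"

definition quasi_ideal :: "'K::field set \<Rightarrow> ('K set \<Rightarrow> 'K set) \<Rightarrow> 'K set \<Rightarrow> bool" where
  "quasi_ideal R st I \<longleftrightarrow> nz_ideal R I \<and> st I \<inter> R = I"

definition prime_ideal :: "'K::field set \<Rightarrow> 'K set \<Rightarrow> bool" where
  "prime_ideal R P \<longleftrightarrow> P \<subseteq> R \<and> submodule R P \<and> P \<noteq> R \<and>
     (\<forall>x\<in>R. \<forall>y\<in>R. x * y \<in> P \<longrightarrow> x \<in> P \<or> y \<in> P)"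

definition quasi_prime :: "'K::field set \<Rightarrow> ('K set \<Rightarrow> 'K set) \<Rightarrow> 'K set \<Rightarrow> bool" where
  "quasi_prime R st P \<longleftrightarrow> prime_ideal R P \<and> quasi_ideal R st P"

definition quasi_maximal :: "'K::field set \<Rightarrow> ('K set \<Rightarrow> 'K set) \<Rightarrow> 'K set \<Rightarrow> bool" where
  "quasi_maximal R st M \<longleftrightarrow> quasi_ideal R st M \<and> M \<noteq> R \<and>
     (\<forall>J. quasi_ideal R st J \<and> J \<noteq> R \<and> M \<subseteq> J \<longrightarrow> J = M)"

definition ext_ideal :: "'K::field set \<Rightarrow> 'K set \<Rightarrow> 'K set" where
  "ext_ideal I T = {(\<Sum>i<n. t i * x i) | (n::nat) t x. \<forall>i<n. t i \<in> T \<and> x i \<in> I}"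

definition linked :: "'K::field set \<Rightarrow> ('K set \<Rightarrow> 'K set) \<Rightarrow> 'K set \<Rightarrow> ('K set \<Rightarrow> 'K set) \<Rightarrow> bool" where
  "linked D st T st' \<longleftrightarrow>
     (\<forall>F. nz_ideal D F \<and> F \<in> ffg D \<and> st F = st D \<longrightarrow> st' (ext_ideal F T) = st' T)"

end

theory Submission
  imports Defs
begin

lemma sub_mult: "submodule R E \<Longrightarrow> r \<in> R \<Longrightarrow> x \<in> E \<Longrightarrow> r * x \<in> E"
  by (simp add: submodule_def)
lemma sub_add: "submodule R E \<Longrightarrow> x \<in> E \<Longrightarrow> y \<in> E \<Longrightarrow> x + y \<in> E"
  by (simp add: submodule_def)
lemma sub_zero: "submodule R E \<Longrightarrow> 0 \<in> E"
  by (simp add: submodule_def)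
lemma Fbar_iff: "E \<in> Fbar R \<longleftrightarrow> submodule R E \<and> E \<noteq> {0}"
  by (simp add: Fbar_def)

lemma rspan_intro: "\<forall>s\<in>S. a s \<in> R \<Longrightarrow> z = (\<Sum>s\<in>S. a s * s) \<Longrightarrow> z \<in> rspan R S"
  unfolding rspan_def by blast

lemma rspan_submodule:
  assumes "subring R" shows "submodule R (rspan R S)"
  unfolding submodule_def
proof (intro conjI ballI)
  show "0 \<in> rspan R S" unfolding rspan_def
    using assms by (auto simp: subring_def intro!: exI[of _ "\<lambda>_. 0"])
next
  fix x y assume "x \<in> rspan R S" "y \<in> rspan R S"
  then obtain a b where a: "x = (\<Sum>s\<in>S. a s * s)" "\<forall>s\<in>S. a s \<in> R"
    and b: "y = (\<Sum>s\<in>S. b s * s)" "\<forall>s\<in>S. b s \<in> R" unfolding rspan_def by blast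
  have "x + y = (\<Sum>s\<in>S. (a s + b s) * s)" using a b by (simp add: sum.distrib algebra_simps)
  moreover have "\<forall>s\<in>S. a s + b s \<in> R" using a b assms by (simp add: subring_def)
  ultimately show "x + y \<in> rspan R S" by (intro rspan_intro) auto
next
  fix r x assume r: "r \<in> R" and "x \<in> rspan R S"
  then obtain a where a: "x = (\<Sum>s\<in>S. a s * s)" "\<forall>s\<in>S. a s \<in> R" unfolding rspan_def by blast
  have "r * x = (\<Sum>s\<in>S. (r * a s) * s)" using a by (simp add: sum_distrib_left mult.assoc)
  moreover have "\<forall>s\<in>S. r * a s \<in> R" using a r assms by (simp add: subring_def)
  ultimately show "r * x \<in> rspan R S" by (intro rspan_intro) auto
qed

lemma sum_in_sub:
  assumes "finite S" "S \<subseteq> M" "submodule R M" "\<forall>s\<in>S. a s \<in> R"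
  shows "(\<Sum>s\<in>S. a s * s) \<in> M"
  using assms
proof (induction S rule: finite_induct)
  case empty then show ?case by (simp add: sub_zero)
next
  case (insert s S)
  then show ?case by (simp add: sub_add sub_mult)
qed

lemma rspan_least:
  assumes "finite S" "S \<subseteq> M" "submodule R M" shows "rspan R S \<subseteq> M"
  using sum_in_sub[OF assms] unfolding rspan_def by blast

lemma rspan_gen:
  assumes "subring R" "finite S" "s \<in> S" shows "s \<in> rspan R S"
proof -
  have "(\<Sum>t\<in>S. (if t = s then 1 else 0) * t) = (\<Sum>t\<in>S. if t = s then t else 0)"
    by (rule sum.cong) auto
  also have "\<dots> = s" using assms by simp
  finally have "(\<Sum>t\<in>S. (if t = s then 1 else (0::'a)) * t) = s" .
  moreover have "\<forall>t\<in>S. (if t = s then 1 else 0) \<in> R" using assms(1) by (simp add: subring_def)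
  ultimately show ?thesis by (intro rspan_intro) auto
qed

lemma rspan_sub_gen: "subring R \<Longrightarrow> finite S \<Longrightarrow> S \<subseteq> rspan R S"
  using rspan_gen by blast

lemma rspan_mono_set:
  assumes "subring R" "finite S'" "S \<subseteq> S'" shows "rspan R S \<subseteq> rspan R S'"
proof -
  have "S \<subseteq> rspan R S'" using rspan_sub_gen[OF assms(1,2)] assms(3) by blast
  then show ?thesis using rspan_least[OF finite_subset[OF assms(3,2)] _ rspan_submodule[OF assms(1)]] by blast
qed

lemma rspan_mono_ring: "R \<subseteq> R' \<Longrightarrow> rspan R S \<subseteq> rspan R' S"
  unfolding rspan_def by blast

lemma rspan_empty: "rspan R {} = {0}"
  unfolding rspan_def by simp

lemma rspan_scale:
  fixes y :: "'K::field"
  assumes "y \<noteq> 0"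
  shows "(\<lambda>e. y * e) ` rspan R S = rspan R ((\<lambda>e. y * e) ` S)"
proof -
  have inj: "inj_on (\<lambda>e. y * e) S" using assms by (auto simp: inj_on_def)
  show ?thesis
  proof
    show "(\<lambda>e. y * e) ` rspan R S \<subseteq> rspan R ((\<lambda>e. y * e) ` S)"
    proof
      fix z assume "z \<in> (\<lambda>e. y * e) ` rspan R S"
      then obtain a where a: "z = y * (\<Sum>s\<in>S. a s * s)" "\<forall>s\<in>S. a s \<in> R" unfolding rspan_def by blast
      have "(\<Sum>u\<in>(\<lambda>e. y * e) ` S. a (u / y) * u) = (\<Sum>s\<in>S. a (y * s / y) * (y * s))"
        by (simp add: sum.reindex[OF inj])
      also have "\<dots> = z" using a assms by (simp add: sum_distrib_left algebra_simps)
      finally have "z = (\<Sum>u\<in>(\<lambda>e. y * e) ` S. a (u / y) * u)" by simp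
      moreover have "\<forall>u\<in>(\<lambda>e. y * e) ` S. a (u / y) \<in> R" using a assms by auto
      ultimately show "z \<in> rspan R ((\<lambda>e. y * e) ` S)" by (intro rspan_intro) auto
    qed
  next
    show "rspan R ((\<lambda>e. y * e) ` S) \<subseteq> (\<lambda>e. y * e) ` rspan R S"
    proof
      fix z assume "z \<in> rspan R ((\<lambda>e. y * e) ` S)"
      then obtain b where b: "z = (\<Sum>u\<in>(\<lambda>e. y * e) ` S. b u * u)" "\<forall>u\<in>(\<lambda>e. y * e) ` S. b u \<in> R"
        unfolding rspan_def by blast
      have "z = (\<Sum>s\<in>S. b (y * s) * (y * s))" using b by (simp add: sum.reindex[OF inj])
      also have "\<dots> = y * (\<Sum>s\<in>S. b (y * s) * s)" by (simp add: sum_distrib_left algebra_simps)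
      finally have "z = y * (\<Sum>s\<in>S. b (y * s) * s)" .
      moreover have "(\<Sum>s\<in>S. b (y * s) * s) \<in> rspan R S" using b unfolding rspan_def by auto
      ultimately show "z \<in> (\<lambda>e. y * e) ` rspan R S" by blast
    qed
  qed
qed

lemma ffg_scale:
  fixes y :: "'K::field"
  assumes "y \<noteq> 0" "G \<in> ffg R" "subring R" shows "(\<lambda>e. y * e) ` G \<in> ffg R"
proof -
  obtain S where S: "finite S" "G = rspan R S" "G \<noteq> {0}" using assms(2) unfolding ffg_def by blast
  have "(\<lambda>e. y * e) ` G = rspan R ((\<lambda>e. y * e) ` S)" using S rspan_scale[OF assms(1)] by simp
  moreover have "(\<lambda>e. y * e) ` G \<noteq> {0}"
  proof
    assume h: "(\<lambda>e. y * e) ` G = {0}"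
    have "0 \<in> G" using S(2) sub_zero[OF rspan_submodule[OF assms(3)]] by simp
    then obtain g where "g \<in> G" "g \<noteq> 0" using S(3) by blast
    then have "y * g \<in> {0}" using h by blast
    then show False using assms(1) \<open>g \<noteq> 0\<close> by simp
  qed
  ultimately show ?thesis unfolding ffg_def using S(1) by blast
qed

lemma ffg_Fbar: "subring R \<Longrightarrow> F \<in> ffg R \<Longrightarrow> F \<in> Fbar R"
  unfolding ffg_def Fbar_def using rspan_submodule by blast


lemma sum_concat_nat:
  "(\<Sum>i<(n::nat)+m. f i) = (\<Sum>i<n. f i) + (\<Sum>i<m. f (n + i))"
  by (induct m) (auto simp: add_ac)

lemma ext_intro: "\<forall>i<(n::nat). t i \<in> T \<and> x i \<in> I \<Longrightarrow> z = (\<Sum>i<n. t i * x i) \<Longrightarrow> z \<in> ext_ideal I T"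
  unfolding ext_ideal_def by blast

lemma ext_elim: "z \<in> ext_ideal I T \<Longrightarrow> (\<And>n t u. z = (\<Sum>i<(n::nat). t i * u i) \<Longrightarrow> \<forall>i<n. t i \<in> T \<and> u i \<in> I \<Longrightarrow> P) \<Longrightarrow> P"
  unfolding ext_ideal_def by blast

lemma ext_submodule:
  assumes "subring T" shows "submodule T (ext_ideal I T)"
  unfolding submodule_def
proof (intro conjI ballI)
  show "0 \<in> ext_ideal I T" by (rule ext_intro[of 0]) auto
next
  fix x y assume "x \<in> ext_ideal I T" "y \<in> ext_ideal I T"
  obtain n t u where a: "x = (\<Sum>i<(n::nat). t i * u i)" "\<forall>i<n. t i \<in> T \<and> u i \<in> I"
    using \<open>x \<in> ext_ideal I T\<close> by (rule ext_elim) blast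
  obtain m t' u' where b: "y = (\<Sum>i<(m::nat). t' i * u' i)" "\<forall>i<m. t' i \<in> T \<and> u' i \<in> I"
    using \<open>y \<in> ext_ideal I T\<close> by (rule ext_elim) blast
  define tt where "tt i = (if i < n then t i else t' (i - n))" for i
  define uu where "uu i = (if i < n then u i else u' (i - n))" for i
  have "(\<Sum>i<n+m. tt i * uu i) = (\<Sum>i<n. tt i * uu i) + (\<Sum>i<m. tt (n+i) * uu (n+i))"
    by (rule sum_concat_nat)
  also have "\<dots> = x + y" using a b by (simp add: tt_def uu_def)
  finally have "x + y = (\<Sum>i<n+m. tt i * uu i)" by simp
  moreover have "\<forall>i<n+m. tt i \<in> T \<and> uu i \<in> I" using a b by (auto simp: tt_def uu_def)
  ultimately show "x + y \<in> ext_ideal I T" by (intro ext_intro) auto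
next
  fix r x assume r: "r \<in> T" and "x \<in> ext_ideal I T"
  obtain n t u where a: "x = (\<Sum>i<(n::nat). t i * u i)" "\<forall>i<n. t i \<in> T \<and> u i \<in> I"
    using \<open>x \<in> ext_ideal I T\<close> by (rule ext_elim) blast
  have "r * x = (\<Sum>i<n. (r * t i) * u i)" using a by (simp add: sum_distrib_left mult.assoc)
  moreover have "\<forall>i<n. r * t i \<in> T \<and> u i \<in> I" using a r assms by (simp add: subring_def)
  ultimately show "r * x \<in> ext_ideal I T" by (intro ext_intro) auto
qed

lemma ext_least:
  assumes "submodule T M" "I \<subseteq> M" shows "ext_ideal I T \<subseteq> M"
proof
  fix z assume "z \<in> ext_ideal I T"
  then obtain n t u where a: "z = (\<Sum>i<(n::nat). t i * u i)" "\<forall>i<n. t i \<in> T \<and> u i \<in> I" by (rule ext_elim) blast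
  have "\<forall>i<n. t i \<in> T \<and> u i \<in> I \<Longrightarrow> (\<Sum>i<n. t i * u i) \<in> M" for n :: nat
    by (induct n) (use assms in \<open>auto simp: sub_zero sub_add sub_mult\<close>)
  then show "z \<in> M" using a by simp
qed

lemma ext_contains:
  assumes "subring T" shows "I \<subseteq> ext_ideal I T"
proof
  fix x assume "x \<in> I"
  then show "x \<in> ext_ideal I T" using assms
    by (intro ext_intro[of "Suc 0" "\<lambda>_. 1" T "\<lambda>_. x"]) (auto simp: subring_def lessThan_Suc)
qed

lemma subring_submodule: "subring T \<Longrightarrow> submodule T T"
  by (simp add: subring_def submodule_def)

lemma ext_sub_T: "subring T \<Longrightarrow> I \<subseteq> T \<Longrightarrow> ext_ideal I T \<subseteq> T"
  by (simp add: ext_least subring_submodule)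

lemma ss_Fbar: "semistar R st \<Longrightarrow> E \<in> Fbar R \<Longrightarrow> st E \<in> Fbar R"
  by (simp add: semistar_def)
lemma ss_ext: "semistar R st \<Longrightarrow> E \<in> Fbar R \<Longrightarrow> E \<subseteq> st E"
  by (simp add: semistar_def)
lemma ss_idem: "semistar R st \<Longrightarrow> E \<in> Fbar R \<Longrightarrow> st (st E) = st E"
  by (simp add: semistar_def)
lemma ss_mono: "semistar R st \<Longrightarrow> E \<in> Fbar R \<Longrightarrow> F \<in> Fbar R \<Longrightarrow> E \<subseteq> F \<Longrightarrow> st E \<subseteq> st F"
  by (simp add: semistar_def)
lemma ss_mult: "semistar R st \<Longrightarrow> x \<noteq> 0 \<Longrightarrow> E \<in> Fbar R \<Longrightarrow> st ((\<lambda>e. x * e) ` E) = (\<lambda>e. x * e) ` st E"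
  by (simp add: semistar_def)

lemma ss_sub: "semistar R st \<Longrightarrow> E \<in> Fbar R \<Longrightarrow> submodule R (st E)"
  using ss_Fbar Fbar_iff by blast

lemma ss_one:
  assumes "semistar R st" "subring R" "E \<in> Fbar R" "1 \<in> st E" shows "st R \<subseteq> st E"
proof -
  have RF: "R \<in> Fbar R" using assms(2) by (auto simp: Fbar_iff subring_submodule subring_def)
  have "R \<subseteq> st E" using sub_mult[OF ss_sub[OF assms(1,3)] _ assms(4)] by auto
  then have "st R \<subseteq> st (st E)" using ss_mono[OF assms(1) RF ss_Fbar[OF assms(1,3)]] by blast
  then show ?thesis using ss_idem[OF assms(1,3)] by simp
qed

lemma sf_mono: "E \<subseteq> E' \<Longrightarrow> star_f R st E \<subseteq> star_f R st E'"
  unfolding star_f_def by blast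
lemma sf_ge: "F \<in> ffg R \<Longrightarrow> F \<subseteq> E \<Longrightarrow> st F \<subseteq> star_f R st E"
  unfolding star_f_def by blast
lemma sf_elim: "x \<in> star_f R st E \<Longrightarrow> (\<And>F. F \<in> ffg R \<Longrightarrow> F \<subseteq> E \<Longrightarrow> x \<in> st F \<Longrightarrow> P) \<Longrightarrow> P"
  unfolding star_f_def by blast
lemma sf_le:
  assumes "semistar R st" "subring R" "E \<subseteq> E0" "E0 \<in> Fbar R" shows "star_f R st E \<subseteq> st E0"
proof
  fix x assume "x \<in> star_f R st E"
  then obtain F where F: "F \<in> ffg R" "F \<subseteq> E" "x \<in> st F" by (rule sf_elim) blast
  have "st F \<subseteq> st E0" using ss_mono[OF assms(1) ffg_Fbar[OF assms(2) F(1)] assms(4)] F(2) assms(3) by blast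
  then show "x \<in> st E0" using F(3) by blast
qed

lemma single_ffg:
  assumes "subring R" "x \<noteq> 0" shows "rspan R {x} \<in> ffg R" "x \<in> rspan R {x}"
proof -
  show "x \<in> rspan R {x}" using rspan_gen[OF assms(1)] by simp
  then show "rspan R {x} \<in> ffg R" unfolding ffg_def using assms(2) by blast
qed

lemma sf_contains:
  assumes "semistar R st" "subring R" "E \<in> Fbar R" shows "E \<subseteq> star_f R st E"
proof
  fix x assume x: "x \<in> E"
  have sub: "submodule R E" using assms(3) Fbar_iff by blast
  obtain e where e: "e \<in> E" "e \<noteq> 0" using assms(3) sub_zero[OF sub] by (auto simp: Fbar_iff)
  have span_le: "rspan R {y} \<subseteq> E" if "y \<in> E" for y using rspan_least[OF _ _ sub] that by simp
  show "x \<in> star_f R st E"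
  proof (cases "x = 0")
    case True
    have "0 \<in> st (rspan R {e})"
      using sub_zero ss_sub[OF assms(1) ffg_Fbar[OF assms(2) single_ffg(1)[OF assms(2) e(2)]]] by blast
    then show ?thesis using True sf_ge[OF single_ffg(1)[OF assms(2) e(2)] span_le[OF e(1)]] by blast
  next
    case False
    have "x \<in> st (rspan R {x})"
      using ss_ext[OF assms(1) ffg_Fbar[OF assms(2) single_ffg(1)[OF assms(2) False]]] single_ffg(2)[OF assms(2) False] by blast
    then show ?thesis using sf_ge[OF single_ffg(1)[OF assms(2) False] span_le[OF x]] by blast
  qed
qed

lemma ffg_directed:
  assumes "subring R" "F1 \<in> ffg R" "F2 \<in> ffg R" "F1 \<subseteq> E" "F2 \<subseteq> E" "submodule R E"
  shows "\<exists>F\<in>ffg R. F \<subseteq> E \<and> F1 \<subseteq> F \<and> F2 \<subseteq> F"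
proof -
  obtain S1 S2 where S: "finite S1" "F1 = rspan R S1" "F1 \<noteq> {0}" "finite S2" "F2 = rspan R S2"
    using assms(2,3) unfolding ffg_def by blast
  let ?F = "rspan R (S1 \<union> S2)"
  have "S1 \<union> S2 \<subseteq> E" using rspan_sub_gen[OF assms(1)] S assms(4,5) by blast
  then have 1: "?F \<subseteq> E" using rspan_least[OF _ _ assms(6)] S by simp
  have 2: "F1 \<subseteq> ?F" "F2 \<subseteq> ?F" using rspan_mono_set[OF assms(1)] S by auto
  have "0 \<in> F1" using S(2) sub_zero[OF rspan_submodule[OF assms(1)]] by simp
  then have "?F \<noteq> {0}" using 2 S(3) by blast
  moreover have "finite (S1 \<union> S2)" using S(1,4) by simp
  ultimately have 3: "?F \<in> ffg R" unfolding ffg_def by blast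
  show ?thesis using 1 2 3 by blast
qed

lemma sf_finite_cover:
  assumes "semistar R st" "subring R" "submodule R E" "finite S" "S \<noteq> {}" "S \<subseteq> star_f R st E"
  shows "\<exists>F\<in>ffg R. F \<subseteq> E \<and> S \<subseteq> st F"
  using assms(4,5,6)
proof (induction S rule: finite_ne_induct)
  case (singleton x)
  then have "x \<in> star_f R st E" by simp
  then show ?case by (rule sf_elim) blast
next
  case (insert x S)
  have "S \<subseteq> star_f R st E" using insert.prems by simp
  then obtain F0 where F0: "F0 \<in> ffg R" "F0 \<subseteq> E" "S \<subseteq> st F0" using insert.IH by blast
  have "x \<in> star_f R st E" using insert.prems by simp
  then obtain F1 where F1: "F1 \<in> ffg R" "F1 \<subseteq> E" "x \<in> st F1" by (rule sf_elim) blast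
  obtain F where F: "F \<in> ffg R" "F \<subseteq> E" "F0 \<subseteq> F" "F1 \<subseteq> F"
    using ffg_directed[OF assms(2) F0(1) F1(1) F0(2) F1(2) assms(3)] by blast
  have "st F0 \<subseteq> st F" using ss_mono[OF assms(1) ffg_Fbar[OF assms(2) F0(1)] ffg_Fbar[OF assms(2) F(1)] F(3)] .
  moreover have "st F1 \<subseteq> st F" using ss_mono[OF assms(1) ffg_Fbar[OF assms(2) F1(1)] ffg_Fbar[OF assms(2) F(1)] F(4)] .
  ultimately have "insert x S \<subseteq> st F" using F0(3) F1(3) by blast
  then show ?case using F(1,2) by blast
qed

lemma sf_idem_key:
  assumes "semistar R st" "subring R" "submodule R E" "G \<in> ffg R" "G \<subseteq> star_f R st E"
  shows "\<exists>F\<in>ffg R. F \<subseteq> E \<and> st G \<subseteq> st F"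
proof -
  obtain S where S: "finite S" "G = rspan R S" "G \<noteq> {0}" using assms(4) unfolding ffg_def by blast
  have "S \<noteq> {}" using S rspan_empty by metis
  moreover have "S \<subseteq> star_f R st E" using rspan_sub_gen[OF assms(2) S(1)] S(2) assms(5) by blast
  ultimately obtain F where F: "F \<in> ffg R" "F \<subseteq> E" "S \<subseteq> st F"
    using sf_finite_cover[OF assms(1,2,3) S(1)] by blast
  have FF: "F \<in> Fbar R" using ffg_Fbar[OF assms(2) F(1)] .
  have "G \<subseteq> st F" using rspan_least[OF S(1) F(3) ss_sub[OF assms(1) FF]] S(2) by simp
  then have "st G \<subseteq> st (st F)" using ss_mono[OF assms(1) ffg_Fbar[OF assms(2) assms(4)] ss_Fbar[OF assms(1) FF]] by blast
  then show ?thesis using ss_idem[OF assms(1) FF] F by auto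
qed

lemma sf_idem:
  assumes "semistar R st" "subring R" "submodule R E" shows "star_f R st (star_f R st E) \<subseteq> star_f R st E"
proof
  fix x assume "x \<in> star_f R st (star_f R st E)"
  then obtain G where G: "G \<in> ffg R" "G \<subseteq> star_f R st E" "x \<in> st G" by (auto elim: sf_elim)
  then obtain F where "F \<in> ffg R" "F \<subseteq> E" "st G \<subseteq> st F" using sf_idem_key[OF assms] by blast
  then show "x \<in> star_f R st E" using G sf_ge by blast
qed

lemma sf_submodule:
  assumes "semistar R st" "subring R" "E \<in> Fbar R" shows "submodule R (star_f R st E)"
  unfolding submodule_def
proof (intro conjI ballI)
  have sub: "submodule R E" using assms(3) Fbar_iff by blast
  show "0 \<in> star_f R st E" using sf_contains[OF assms] sub_zero[OF sub] by blast
  fix x y assume "x \<in> star_f R st E" "y \<in> star_f R st E"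
  then obtain F1 F2 where F: "F1 \<in> ffg R" "F1 \<subseteq> E" "x \<in> st F1" "F2 \<in> ffg R" "F2 \<subseteq> E" "y \<in> st F2"
    by (auto elim!: sf_elim)
  obtain F where F': "F \<in> ffg R" "F \<subseteq> E" "F1 \<subseteq> F" "F2 \<subseteq> F"
    using ffg_directed[OF assms(2) F(1) F(4) F(2) F(5) sub] by blast
  have "st F1 \<subseteq> st F" "st F2 \<subseteq> st F" using ss_mono[OF assms(1)] ffg_Fbar[OF assms(2)] F F' by auto
  then have "x + y \<in> st F" using sub_add[OF ss_sub[OF assms(1) ffg_Fbar[OF assms(2) F'(1)]]] F by blast
  then show "x + y \<in> star_f R st E" using sf_ge[OF F'(1,2)] by blast
next
  fix r x assume "r \<in> R" "x \<in> star_f R st E"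
  then obtain F where F: "F \<in> ffg R" "F \<subseteq> E" "x \<in> st F" by (auto elim: sf_elim)
  then have "r * x \<in> st F" using sub_mult[OF ss_sub[OF assms(1) ffg_Fbar[OF assms(2) F(1)]] \<open>r \<in> R\<close>] by blast
  then show "r * x \<in> star_f R st E" using sf_ge[OF F(1,2)] by blast
qed


lemma exists_qmax:
  assumes st': "semistar T st'" and T: "subring T" and AT: "A \<subseteq> T" and Asub: "submodule T A"
    and A0: "A \<noteq> {0}" and one: "1 \<notin> star_f T st' A"
  shows "\<exists>N. A \<subseteq> N \<and> quasi_prime T (star_f T st') N \<and> quasi_maximal T (star_f T st') N"
proof -
  define \<A> where "\<A> = {J. J \<subseteq> T \<and> submodule T J \<and> A \<subseteq> J \<and> 1 \<notin> star_f T st' J}"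
  have "\<exists>M\<in>\<A>. \<forall>X\<in>\<A>. M \<subseteq> X \<longrightarrow> X = M"
  proof (rule subset_Zorn_nonempty)
    show "\<A> \<noteq> {}" using AT Asub one unfolding \<A>_def by blast
  next
    fix C assume C: "C \<noteq> {}" "subset.chain \<A> C"
    have Csub: "C \<subseteq> \<A>" and Cch: "\<forall>X\<in>C. \<forall>Y\<in>C. X \<subseteq> Y \<or> Y \<subseteq> X"
      using C(2) by (auto simp: subset_chain_def)
    obtain J0 where J0: "J0 \<in> C" using C(1) by blast
    have "\<Union>C \<subseteq> T" using Csub unfolding \<A>_def by blast
    moreover have "submodule T (\<Union>C)"
      unfolding submodule_def
    proof (intro conjI ballI)
      show "0 \<in> \<Union>C" using J0 Csub sub_zero unfolding \<A>_def by blast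
    next
      fix x y assume "x \<in> \<Union>C" "y \<in> \<Union>C"
      then obtain X Y where XY: "X \<in> C" "Y \<in> C" "x \<in> X" "y \<in> Y" by blast
      show "x + y \<in> \<Union>C"
      proof (cases "X \<subseteq> Y")
        case True
        then have "x + y \<in> Y" using XY Csub sub_add unfolding \<A>_def by blast
        then show ?thesis using XY by blast
      next
        case False
        then have "Y \<subseteq> X" using Cch XY by blast
        then have "x + y \<in> X" using XY Csub sub_add unfolding \<A>_def by blast
        then show ?thesis using XY by blast
      qed
    next
      fix r x assume "r \<in> T" "x \<in> \<Union>C"
      then obtain X where "X \<in> C" "x \<in> X" by blast
      then have "r * x \<in> X" using Csub sub_mult \<open>r \<in> T\<close> unfolding \<A>_def by blast
      then show "r * x \<in> \<Union>C" using \<open>X \<in> C\<close> by blast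
    qed
    moreover have "A \<subseteq> \<Union>C" using J0 Csub unfolding \<A>_def by blast
    moreover have "1 \<notin> star_f T st' (\<Union>C)"
    proof
      assume "1 \<in> star_f T st' (\<Union>C)"
      then obtain G where G: "G \<in> ffg T" "G \<subseteq> \<Union>C" "1 \<in> st' G" by (rule sf_elim) blast
      obtain S where S: "finite S" "G = rspan T S" using G(1) unfolding ffg_def by blast
      have "S \<subseteq> \<Union>C" using rspan_sub_gen[OF T S(1)] S(2) G(2) by blast
      then obtain J where J: "J \<in> C" "S \<subseteq> J" using finite_subset_Union_chain[OF S(1) _ C(1) C(2)] by blast
      have Jm: "J \<subseteq> T \<and> submodule T J \<and> A \<subseteq> J \<and> 1 \<notin> star_f T st' J" using J(1) Csub unfolding \<A>_def by blast
      have "G \<subseteq> J" using rspan_least[OF S(1) J(2)] Jm S(2) by blast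
      then have "1 \<in> star_f T st' J" using sf_ge[OF G(1)] G(3) by blast
      then show False using Jm by blast
    qed
    ultimately show "\<Union>C \<in> \<A>" unfolding \<A>_def by blast
  qed
  then obtain N where N: "N \<in> \<A>" and Nmax: "\<forall>X\<in>\<A>. N \<subseteq> X \<longrightarrow> X = N" by blast
  have NT: "N \<subseteq> T" and Nsub: "submodule T N" and AN: "A \<subseteq> N" and N1: "1 \<notin> star_f T st' N"
    using N unfolding \<A>_def by blast+
  have N0: "N \<noteq> {0}" using AN A0 sub_zero[OF Asub] by blast
  have NF: "N \<in> Fbar T" using Nsub N0 by (simp add: Fbar_iff)
  have Ncont: "N \<subseteq> star_f T st' N" using sf_contains[OF st' T NF] .
  have oneT: "1 \<in> T" using T by (simp add: subring_def)
  have NneT: "N \<noteq> T" using Ncont N1 oneT by blast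
  have key: "1 \<in> star_f T st' {n + t * x | n t. n \<in> N \<and> t \<in> T}"
    if x: "x \<in> T" "x \<notin> N" for x
  proof (rule ccontr)
    let ?N' = "{n + t * x | n t. n \<in> N \<and> t \<in> T}"
    assume nin: "1 \<notin> star_f T st' ?N'"
    have "?N' \<subseteq> T" using NT x T by (auto simp: subring_def)
    moreover have "submodule T ?N'"
      unfolding submodule_def
    proof (intro conjI ballI)
      show "0 \<in> ?N'" using sub_zero[OF Nsub] T by (auto simp: subring_def intro!: exI[of _ 0])
    next
      fix a b assume "a \<in> ?N'" "b \<in> ?N'"
      then obtain n1 t1 n2 t2 where ab: "a = n1 + t1 * x" "b = n2 + t2 * x" "n1 \<in> N" "t1 \<in> T" "n2 \<in> N" "t2 \<in> T"
        by blast
      have "a + b = (n1 + n2) + (t1 + t2) * x" using ab by (simp add: algebra_simps)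
      moreover have "n1 + n2 \<in> N" using ab sub_add[OF Nsub] by blast
      moreover have "t1 + t2 \<in> T" using ab T by (simp add: subring_def)
      ultimately show "a + b \<in> ?N'" by blast
    next
      fix r a assume r: "r \<in> T" and "a \<in> ?N'"
      then obtain n1 t1 where ab: "a = n1 + t1 * x" "n1 \<in> N" "t1 \<in> T" by blast
      have "r * a = (r * n1) + (r * t1) * x" using ab by (simp add: algebra_simps)
      moreover have "r * n1 \<in> N" using ab sub_mult[OF Nsub r] by blast
      moreover have "r * t1 \<in> T" using ab r T by (simp add: subring_def)
      ultimately show "r * a \<in> ?N'" by blast
    qed
    moreover have NN': "N \<subseteq> ?N'"
    proof
      fix n assume "n \<in> N"
      then show "n \<in> ?N'"
        by (intro CollectI exI[of _ n] exI[of _ 0]) (use T in \<open>auto simp: subring_def\<close>)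
    qed
    ultimately have "?N' \<in> \<A>" using AN nin unfolding \<A>_def by blast
    then have "?N' = N" using Nmax NN' by blast
    moreover have "x \<in> ?N'"
    proof -
      have "x = 0 + 1 * x" by simp
      then show ?thesis using sub_zero[OF Nsub] oneT by blast
    qed
    ultimately show False using x by blast
  qed
  have sfN_sub: "submodule T (star_f T st' N)" using sf_submodule[OF st' T NF] .
  have quasi: "star_f T st' N \<inter> T = N"
  proof
    show "N \<subseteq> star_f T st' N \<inter> T" using Ncont NT by blast
  next
    show "star_f T st' N \<inter> T \<subseteq> N"
    proof (rule ccontr)
      assume "\<not> star_f T st' N \<inter> T \<subseteq> N"
      then obtain x where x: "x \<in> star_f T st' N" "x \<in> T" "x \<notin> N" by blast
      let ?N' = "{n + t * x | n t. n \<in> N \<and> t \<in> T}"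
      have "?N' \<subseteq> star_f T st' N"
      proof
        fix a assume "a \<in> ?N'"
        then obtain n t where a: "a = n + t * x" "n \<in> N" "t \<in> T" by blast
        have "n \<in> star_f T st' N" using a Ncont by blast
        moreover have "t * x \<in> star_f T st' N" using sub_mult[OF sfN_sub a(3) x(1)] .
        ultimately show "a \<in> star_f T st' N" using a sub_add[OF sfN_sub] by blast
      qed
      then have "star_f T st' ?N' \<subseteq> star_f T st' (star_f T st' N)" by (rule sf_mono)
      also have "\<dots> \<subseteq> star_f T st' N" using sf_idem[OF st' T Nsub] .
      finally show False using key[OF x(2,3)] N1 by blast
    qed
  qed
  have qideal: "quasi_ideal T (star_f T st') N"
    unfolding quasi_ideal_def nz_ideal_def using NT Nsub N0 quasi by blast
  have prime: "\<forall>x\<in>T. \<forall>y\<in>T. x * y \<in> N \<longrightarrow> x \<in> N \<or> y \<in> N"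
  proof (intro ballI impI)
    fix x y assume xT: "x \<in> T" and yT: "y \<in> T" and xy: "x * y \<in> N"
    show "x \<in> N \<or> y \<in> N"
    proof (rule ccontr)
      assume "\<not> (x \<in> N \<or> y \<in> N)"
      then have xN: "x \<notin> N" and yN: "y \<notin> N" by auto
      let ?N' = "{n + t * x | n t. n \<in> N \<and> t \<in> T}"
      obtain G where G: "G \<in> ffg T" "G \<subseteq> ?N'" "1 \<in> st' G" using key[OF xT xN] by (rule sf_elim) blast
      have y0: "y \<noteq> 0" using yN sub_zero[OF Nsub] by auto
      have yG: "(\<lambda>e. y * e) ` G \<in> ffg T" using ffg_scale[OF y0 G(1) T] .
      have yGN: "(\<lambda>e. y * e) ` G \<subseteq> N"
      proof
        fix z assume "z \<in> (\<lambda>e. y * e) ` G"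
        then obtain n t where z: "z = y * (n + t * x)" "n \<in> N" "t \<in> T" using G(2) by blast
        have "z = y * n + t * (x * y)" using z(1) by (simp add: algebra_simps)
        moreover have "y * n \<in> N" using sub_mult[OF Nsub yT z(2)] .
        moreover have "t * (x * y) \<in> N" using sub_mult[OF Nsub z(3) xy] .
        ultimately show "z \<in> N" using sub_add[OF Nsub] by simp
      qed
      have "st' ((\<lambda>e. y * e) ` G) = (\<lambda>e. y * e) ` st' G"
        using ss_mult[OF st' y0 ffg_Fbar[OF T G(1)]] .
      then have "y \<in> st' ((\<lambda>e. y * e) ` G)" using G(3) by (metis image_eqI mult.right_neutral)
      then have "y \<in> star_f T st' N" using sf_ge[OF yG yGN] by blast
      then have "y \<in> N" using quasi yT by blast
      then show False using yN by blast
    qed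
  qed
  have qprime: "quasi_prime T (star_f T st') N"
    unfolding quasi_prime_def prime_ideal_def using NT Nsub NneT prime qideal by blast
  have qmax: "quasi_maximal T (star_f T st') N"
    unfolding quasi_maximal_def
  proof (intro conjI allI impI)
    show "quasi_ideal T (star_f T st') N" by (rule qideal)
    show "N \<noteq> T" by (rule NneT)
    fix J assume J: "quasi_ideal T (star_f T st') J \<and> J \<noteq> T \<and> N \<subseteq> J"
    have JT: "J \<subseteq> T" and Jsub: "submodule T J" and Jq: "star_f T st' J \<inter> T = J"
      using J unfolding quasi_ideal_def nz_ideal_def by blast+
    have "1 \<notin> star_f T st' J"
    proof
      assume "1 \<in> star_f T st' J"
      then have "1 \<in> J" using Jq oneT by blast
      then have "T \<subseteq> J" using sub_mult[OF Jsub] by fastforce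
      then show False using J JT by blast
    qed
    then have "J \<in> \<A>" using JT Jsub AN J unfolding \<A>_def by blast
    then show "J = N" using Nmax J by blast
  qed
  show ?thesis using AN qprime qmax by blast
qed


theorem proposition3p2:
  fixes D T :: "'K::field set" and st st' :: "'K set \<Rightarrow> 'K set"
  assumes "domain_with_qf D" and "overring D T"
    and "semistar D st" and "semistar T st'"
  shows "(linked D st T st' \<longleftrightarrow>
           (\<forall>I. nz_ideal D I \<and> star_f D st I = st D \<longrightarrow> star_f T st' (ext_ideal I T) = st' T))
       \<and> (linked D st T st' \<longleftrightarrow>
           (\<forall>J. quasi_ideal T (star_f T st') J \<and> J \<noteq> T \<longrightarrow> star_f D st (J \<inter> D) \<noteq> st D))
       \<and> (linked D st T st' \<longleftrightarrow>
           (\<forall>Q. quasi_prime T (star_f T st') Q \<longrightarrow> star_f D st (Q \<inter> D) \<noteq> st D))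
       \<and> (linked D st T st' \<longleftrightarrow>
           (\<forall>N. quasi_maximal T (star_f T st') N \<longrightarrow> star_f D st (N \<inter> D) \<noteq> st D))"
proof -
  have Dr: "subring D" and qf: "\<forall>x::'K. \<exists>a\<in>D. \<exists>b\<in>D. b \<noteq> 0 \<and> x = a / b"
    using assms(1) unfolding domain_with_qf_def by blast+
  have Tr: "subring T" and DT: "D \<subseteq> T" using assms(2) unfolding overring_def by blast+
  have st: "semistar D st" and st': "semistar T st'" using assms(3,4) .
  have oneD: "1 \<in> D" using Dr by (simp add: subring_def)
  have oneT: "1 \<in> T" using Tr by (simp add: subring_def)
  have DF: "D \<in> Fbar D" using Dr oneD by (auto simp: Fbar_iff subring_submodule)
  have TF: "T \<in> Fbar T" using Tr oneT by (auto simp: Fbar_iff subring_submodule)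
  let ?ii = "\<forall>I. nz_ideal D I \<and> star_f D st I = st D \<longrightarrow> star_f T st' (ext_ideal I T) = st' T"
  let ?iii = "\<forall>J. quasi_ideal T (star_f T st') J \<and> J \<noteq> T \<longrightarrow> star_f D st (J \<inter> D) \<noteq> st D"
  let ?iv = "\<forall>Q. quasi_prime T (star_f T st') Q \<longrightarrow> star_f D st (Q \<inter> D) \<noteq> st D"
  let ?v = "\<forall>N. quasi_maximal T (star_f T st') N \<longrightarrow> star_f D st (N \<inter> D) \<noteq> st D"
  have extF: "ext_ideal I T \<in> Fbar T" "ext_ideal I T \<subseteq> T" if "nz_ideal D I" for I
  proof -
    have I: "I \<subseteq> D" "submodule D I" "I \<noteq> {0}" using that unfolding nz_ideal_def by blast+
    have "I \<subseteq> ext_ideal I T" using ext_contains[OF Tr] .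
    then have "ext_ideal I T \<noteq> {0}" using I sub_zero[OF I(2)] by blast
    then show "ext_ideal I T \<in> Fbar T" using ext_submodule[OF Tr] by (simp add: Fbar_iff)
    show "ext_ideal I T \<subseteq> T" using ext_sub_T[OF Tr] I(1) DT by blast
  qed
  have i_ii: "?ii" if lk: "linked D st T st'"
  proof (intro allI impI)
    fix I assume "nz_ideal D I \<and> star_f D st I = st D"
    then have I: "nz_ideal D I" and sfI: "star_f D st I = st D" by blast+
    have ID: "I \<subseteq> D" using I unfolding nz_ideal_def by blast
    have "1 \<in> st D" using ss_ext[OF st DF] oneD by blast
    then have "1 \<in> star_f D st I" using sfI by simp
    then obtain F where F: "F \<in> ffg D" "F \<subseteq> I" "1 \<in> st F" by (rule sf_elim) blast
    have FF: "F \<in> Fbar D" using ffg_Fbar[OF Dr F(1)] .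
    have "st F \<subseteq> st D" using ss_mono[OF st FF DF] F(2) ID by blast
    moreover have "st D \<subseteq> st F" using ss_one[OF st Dr FF F(3)] .
    ultimately have stF: "st F = st D" by blast
    have Fnz: "nz_ideal D F" using FF F(2) ID unfolding nz_ideal_def Fbar_iff by blast
    have eq: "st' (ext_ideal F T) = st' T" using lk Fnz F(1) stF unfolding linked_def by blast
    obtain S0 where S0: "finite S0" "F = rspan D S0" using F(1) unfolding ffg_def by blast
    define G where "G = rspan T S0"
    have Gsub: "submodule T G" unfolding G_def using rspan_submodule[OF Tr] .
    have "F \<subseteq> G" unfolding G_def using S0(2) rspan_mono_ring[OF DT] by blast
    then have extG: "ext_ideal F T \<subseteq> G" using ext_least[OF Gsub] by blast
    have "S0 \<subseteq> ext_ideal I T" using rspan_sub_gen[OF Dr S0(1)] S0(2) F(2) ext_contains[OF Tr, of I] by blast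
    then have GI: "G \<subseteq> ext_ideal I T" unfolding G_def using rspan_least[OF S0(1) _ ext_submodule[OF Tr]] by blast
    have "ext_ideal F T \<in> Fbar T" using extF[OF Fnz] by blast
    then have "ext_ideal F T \<noteq> {0}" by (simp add: Fbar_iff)
    then have G0: "G \<noteq> {0}" using extG sub_zero[OF ext_submodule[OF Tr]] by blast
    have Gffg: "G \<in> ffg T" unfolding ffg_def G_def using S0(1) G0 G_def by blast
    have "st' T \<subseteq> st' G" using eq ss_mono[OF st' \<open>ext_ideal F T \<in> Fbar T\<close> ffg_Fbar[OF Tr Gffg] extG] by simp
    also have "\<dots> \<subseteq> star_f T st' (ext_ideal I T)" using sf_ge[OF Gffg GI] .
    finally have "st' T \<subseteq> star_f T st' (ext_ideal I T)" .
    moreover have "star_f T st' (ext_ideal I T) \<subseteq> st' T" using sf_le[OF st' Tr extF(2)[OF I] TF] .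
    ultimately show "star_f T st' (ext_ideal I T) = st' T" by blast
  qed
  have ii_i: "linked D st T st'" if ii: "?ii"
    unfolding linked_def
  proof (intro allI impI)
    fix F assume "nz_ideal D F \<and> F \<in> ffg D \<and> st F = st D"
    then have F: "nz_ideal D F" "F \<in> ffg D" "st F = st D" by blast+
    have FF: "F \<in> Fbar D" using ffg_Fbar[OF Dr F(2)] .
    have "star_f D st F = st F" using sf_le[OF st Dr _ FF] sf_ge[OF F(2)] by blast
    then have sfe: "star_f T st' (ext_ideal F T) = st' T" using ii F by simp
    have "st' (ext_ideal F T) \<subseteq> st' T" using ss_mono[OF st' extF(1)[OF F(1)] TF extF(2)[OF F(1)]] .
    moreover have "star_f T st' (ext_ideal F T) \<subseteq> st' (ext_ideal F T)" using sf_le[OF st' Tr _ extF(1)[OF F(1)]] by blast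
    ultimately show "st' (ext_ideal F T) = st' T" using sfe by blast
  qed
  have ii_iii: "?iii" if ii: "?ii"
  proof (intro allI impI)
    fix J assume J: "quasi_ideal T (star_f T st') J \<and> J \<noteq> T"
    have JT: "J \<subseteq> T" and Jsub: "submodule T J" and J0: "J \<noteq> {0}" and Jq: "star_f T st' J \<inter> T = J"
      using J unfolding quasi_ideal_def nz_ideal_def by blast+
    show "star_f D st (J \<inter> D) \<noteq> st D"
    proof
      assume eqJ: "star_f D st (J \<inter> D) = st D"
      have "submodule D (J \<inter> D)" unfolding submodule_def
      proof (intro conjI ballI)
        show "0 \<in> J \<inter> D" using sub_zero[OF Jsub] Dr by (simp add: subring_def)
      next
        fix x y assume "x \<in> J \<inter> D" "y \<in> J \<inter> D"
        then show "x + y \<in> J \<inter> D" using sub_add[OF Jsub] Dr by (simp add: subring_def)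
      next
        fix r x assume "r \<in> D" "x \<in> J \<inter> D"
        then show "r * x \<in> J \<inter> D" using sub_mult[OF Jsub] Dr DT by (auto simp: subring_def)
      qed
      moreover have "J \<inter> D \<noteq> {0}"
      proof -
        obtain j where j: "j \<in> J" "j \<noteq> 0" using J0 sub_zero[OF Jsub] by blast
        obtain a b where ab: "a \<in> D" "b \<in> D" "b \<noteq> 0" "j = a / b" using qf by blast
        have "b * j = a" using ab by simp
        moreover have "b * j \<in> J" using sub_mult[OF Jsub _ j(1)] ab DT by blast
        moreover have "a \<noteq> 0" using ab j by auto
        ultimately show ?thesis using ab by blast
      qed
      ultimately have nz: "nz_ideal D (J \<inter> D)" unfolding nz_ideal_def by blast
      have sfe: "star_f T st' (ext_ideal (J \<inter> D) T) = st' T" using ii nz eqJ by blast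
      have "ext_ideal (J \<inter> D) T \<subseteq> J" using ext_least[OF Jsub] by blast
      then have "star_f T st' (ext_ideal (J \<inter> D) T) \<subseteq> star_f T st' J" by (rule sf_mono)
      then have "T \<subseteq> star_f T st' J" using sfe ss_ext[OF st' TF] by blast
      then have "T \<subseteq> J" using Jq by blast
      then show False using J JT by blast
    qed
  qed
  have not_ii: "\<exists>N. quasi_prime T (star_f T st') N \<and> quasi_maximal T (star_f T st') N
                   \<and> star_f D st (N \<inter> D) = st D" if nii: "\<not> ?ii"
  proof -
    obtain I where I: "nz_ideal D I" "star_f D st I = st D" "star_f T st' (ext_ideal I T) \<noteq> st' T"
      using nii by blast
    let ?A = "ext_ideal I T"
    have AF: "?A \<in> Fbar T" and AT: "?A \<subseteq> T" using extF[OF I(1)] by blast+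
    have one: "1 \<notin> star_f T st' ?A"
    proof
      assume "1 \<in> star_f T st' ?A"
      then obtain G where G: "G \<in> ffg T" "G \<subseteq> ?A" "1 \<in> st' G" by (rule sf_elim) blast
      have "st' T \<subseteq> st' G" using ss_one[OF st' Tr ffg_Fbar[OF Tr G(1)] G(3)] .
      also have "\<dots> \<subseteq> star_f T st' ?A" using sf_ge[OF G(1,2)] .
      finally show False using sf_le[OF st' Tr AT TF] I(3) by blast
    qed
    obtain N where N: "?A \<subseteq> N" "quasi_prime T (star_f T st') N" "quasi_maximal T (star_f T st') N"
      using exists_qmax[OF st' Tr AT _ _ one] AF by (auto simp: Fbar_iff)
    have ID: "I \<subseteq> D" using I(1) unfolding nz_ideal_def by blast
    have "I \<subseteq> N \<inter> D" using ext_contains[OF Tr, of I] N(1) ID by blast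
    then have "st D \<subseteq> star_f D st (N \<inter> D)" using sf_mono I(2) by metis
    moreover have "star_f D st (N \<inter> D) \<subseteq> st D" using sf_le[OF st Dr _ DF] by blast
    ultimately show ?thesis using N by blast
  qed
  have iii_iv: "?iv" if "?iii" using that unfolding quasi_prime_def prime_ideal_def by blast
  have iii_v: "?v" if "?iii" using that unfolding quasi_maximal_def by blast
  have iv_ii: "?ii" if "?iv" using that not_ii by blast
  have v_ii: "?ii" if "?v" using that not_ii by blast
  show ?thesis using i_ii ii_i ii_iii iii_iv iii_v iv_ii v_ii by blast
qed

end
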